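(* Let $A$ be a Banach algebra, let $X$ be a commutative Banach algebra which is also a Banach $A$-bimodule and satisfies $\bigcap_{\varphi\in\Delta(X)}\ker\varphi=\{0\}$, let $\psi:A\to X$ be a continuous algebra homomorphism, and let $D:A\to X$ be a bounded linear operator. Then the following are equivalent: (i) $D$ is a $\psi$-derivation, i.e. $D(ab)=D(a)\psi(b)+\psi(a)D(b)$ for all $a,b\in A$ (products taken in $X$); (ii) for every $\varphi\in\Delta(X)$, $\varphi\circ D$ is a $\varphi\circ\psi$-derivation, i.e. $(\varphi\circ D)(ab)=(\varphi\circ D)(a)\,(\varphi\circ\psi)(b)+(\varphi\circ\psi)(a)\,(\varphi\circ D)(b)$ for all $a,b\in A$; (iii) for every $\varphi\in\Delta(X)$, $\varphi\circ D$ is a $(\varphi,\psi)$-point derivation on $A$, i.e. $(\varphi\circ D)(ab)=\varphi(\psi(a))\,(\varphi\circ D)(b)+\varphi(\psi(b))\,(\varphi\circ D)(a)$ for all $a,b\in A$.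
   Context: $\Delta(X)$ denotes the set of all nonzero multiplicative linear functionals on the Banach algebra $X$. The condition $\bigcap_{\varphi\in\Delta(X)}\ker\varphi=\{0\}$ is the paper's notion of semisimplicity. *)

theory Defs
  imports "HOL-Analysis.Analysis"
begin

text \<open>Complex Banach algebras: HOL has only real normed algebras as type classes, so a
complex structure is given by an explicit complex scalar multiplication sc extending
the real one, compatible with the norm and the product.\<close>

definition complex_banach_algebra ::
  "(complex \<Rightarrow> 'a::{real_normed_algebra,banach} \<Rightarrow> 'a) \<Rightarrow> bool" where
  "complex_banach_algebra sc \<longleftrightarrow>
     (\<forall>x. sc 1 x = x) \<and>
     (\<forall>c d x. sc c (sc d x) = sc (c * d) x) \<and>
     (\<forall>c d x. sc (c + d) x = sc c x + sc d x) \<and>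
     (\<forall>c x y. sc c (x + y) = sc c x + sc c y) \<and>
     (\<forall>r x. sc (complex_of_real r) x = r *\<^sub>R x) \<and>
     (\<forall>c x. norm (sc c x) = cmod c * norm x) \<and>
     (\<forall>c x y. sc c (x * y) = sc c x * y \<and> sc c (x * y) = x * sc c y)"

definition bounded_clinear_op ::
  "(complex \<Rightarrow> 'a::real_normed_vector \<Rightarrow> 'a) \<Rightarrow> (complex \<Rightarrow> 'b::real_normed_vector \<Rightarrow> 'b)
    \<Rightarrow> ('a \<Rightarrow> 'b) \<Rightarrow> bool" where
  "bounded_clinear_op scA scB f \<longleftrightarrow>
     bounded_linear f \<and> (\<forall>c x. f (scA c x) = scB c (f x))"

definition cont_alg_hom ::
  "(complex \<Rightarrow> 'a::real_normed_algebra \<Rightarrow> 'a) \<Rightarrow> (complex \<Rightarrow> 'b::real_normed_algebra \<Rightarrow> 'b)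
    \<Rightarrow> ('a \<Rightarrow> 'b) \<Rightarrow> bool" where
  "cont_alg_hom scA scB f \<longleftrightarrow>
     bounded_clinear_op scA scB f \<and> (\<forall>a b. f (a * b) = f a * f b)"

definition banach_bimodule ::
  "(complex \<Rightarrow> 'a::real_normed_algebra \<Rightarrow> 'a) \<Rightarrow> (complex \<Rightarrow> 'x::real_normed_vector \<Rightarrow> 'x)
    \<Rightarrow> ('a \<Rightarrow> 'x \<Rightarrow> 'x) \<Rightarrow> ('x \<Rightarrow> 'a \<Rightarrow> 'x) \<Rightarrow> bool" where
  "banach_bimodule scA scX la ra \<longleftrightarrow>
     bounded_bilinear la \<and> bounded_bilinear ra \<and>
     (\<forall>c a x. la (scA c a) x = scX c (la a x) \<and> la a (scX c x) = scX c (la a x)) \<and>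
     (\<forall>c a x. ra x (scA c a) = scX c (ra x a) \<and> ra (scX c x) a = scX c (ra x a)) \<and>
     (\<forall>a b x. la (a * b) x = la a (la b x)) \<and>
     (\<forall>a b x. ra x (a * b) = ra (ra x a) b) \<and>
     (\<forall>a b x. la a (ra x b) = ra (la a x) b)"

definition characters ::
  "(complex \<Rightarrow> 'x::real_normed_algebra \<Rightarrow> 'x) \<Rightarrow> ('x \<Rightarrow> complex) set" where
  "characters scX = {\<phi>. (\<forall>x y. \<phi> (x + y) = \<phi> x + \<phi> y) \<and>
                         (\<forall>c x. \<phi> (scX c x) = c * \<phi> x) \<and>
                         (\<forall>x y. \<phi> (x * y) = \<phi> x * \<phi> y) \<and>
                         \<phi> \<noteq> (\<lambda>_. 0)}"

definition psi_derivation :: "('a::times \<Rightarrow> 'm::{times,plus}) \<Rightarrow> ('a \<Rightarrow> 'm) \<Rightarrow> bool" where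
  "psi_derivation \<psi> D \<longleftrightarrow> (\<forall>a b. D (a * b) = D a * \<psi> b + \<psi> a * D b)"

definition point_derivation ::
  "('x \<Rightarrow> complex) \<Rightarrow> ('a::times \<Rightarrow> 'x) \<Rightarrow> ('a \<Rightarrow> complex) \<Rightarrow> bool" where
  "point_derivation \<phi> \<psi> d \<longleftrightarrow>
     (\<forall>a b. d (a * b) = \<phi> (\<psi> a) * d b + \<phi> (\<psi> b) * d a)"

end

theory Submission
  imports Defs
begin

theorem theorem2p14:
  fixes scA :: "complex \<Rightarrow> 'a::{real_normed_algebra,banach} \<Rightarrow> 'a"
    and scX :: "complex \<Rightarrow> 'x::{real_normed_algebra,banach,comm_ring} \<Rightarrow> 'x"
    and la :: "'a \<Rightarrow> 'x \<Rightarrow> 'x" and ra :: "'x \<Rightarrow> 'a \<Rightarrow> 'x"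
    and \<psi> D :: "'a \<Rightarrow> 'x"
  assumes "complex_banach_algebra scA"
    and "complex_banach_algebra scX"
    and "banach_bimodule scA scX la ra"
    and "(\<Inter>\<phi>\<in>characters scX. {x. \<phi> x = 0}) = {0}"
    and "cont_alg_hom scA scX \<psi>"
    and "bounded_clinear_op scA scX D"
  shows "(psi_derivation \<psi> D \<longleftrightarrow>
           (\<forall>\<phi>\<in>characters scX. psi_derivation (\<phi> \<circ> \<psi>) (\<phi> \<circ> D)))
       \<and> ((\<forall>\<phi>\<in>characters scX. psi_derivation (\<phi> \<circ> \<psi>) (\<phi> \<circ> D)) \<longleftrightarrow>
           (\<forall>\<phi>\<in>characters scX. point_derivation \<phi> \<psi> (\<phi> \<circ> D)))"
proof -
  have add: "\<phi> (x + y) = \<phi> x + \<phi> y" and mul: "\<phi> (x * y) = \<phi> x * \<phi> y"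
    if "\<phi> \<in> characters scX" for \<phi> x y
    using that unfolding characters_def by auto
  have diff: "\<phi> (x - y) = \<phi> x - \<phi> y" if "\<phi> \<in> characters scX" for \<phi> x y
  proof -
    have "\<phi> x = \<phi> ((x - y) + y)" by simp
    also have "\<dots> = \<phi> (x - y) + \<phi> y" using add[OF that] .
    finally show ?thesis by simp
  qed
  have I: "psi_derivation \<psi> D \<longleftrightarrow>
           (\<forall>\<phi>\<in>characters scX. psi_derivation (\<phi> \<circ> \<psi>) (\<phi> \<circ> D))"
  proof
    assume "psi_derivation \<psi> D"
    then show "\<forall>\<phi>\<in>characters scX. psi_derivation (\<phi> \<circ> \<psi>) (\<phi> \<circ> D)"
      unfolding psi_derivation_def by (simp add: add mul)
  next
    assume H: "\<forall>\<phi>\<in>characters scX. psi_derivation (\<phi> \<circ> \<psi>) (\<phi> \<circ> D)"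
    show "psi_derivation \<psi> D" unfolding psi_derivation_def
    proof (intro allI)
      fix a b
      let ?z = "D (a * b) - (D a * \<psi> b + \<psi> a * D b)"
      have "?z \<in> (\<Inter>\<phi>\<in>characters scX. {x. \<phi> x = 0})"
      proof
        fix \<phi> assume p: "\<phi> \<in> characters scX"
        have "\<phi> ?z = 0" using H p unfolding psi_derivation_def
          by (simp add: diff[OF p] add[OF p] mul[OF p])
        then show "?z \<in> {x. \<phi> x = 0}" by simp
      qed
      then have "?z = 0" using assms(4) by simp
      then show "D (a * b) = D a * \<psi> b + \<psi> a * D b" by simp
    qed
  qed
  have II: "(\<forall>\<phi>\<in>characters scX. psi_derivation (\<phi> \<circ> \<psi>) (\<phi> \<circ> D)) \<longleftrightarrow>
           (\<forall>\<phi>\<in>characters scX. point_derivation \<phi> \<psi> (\<phi> \<circ> D))"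
    unfolding psi_derivation_def point_derivation_def
    by (simp add: mult.commute add.commute)
  show ?thesis using I II by blast
qed

end
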